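(* Assume the standing assumption and suppose $d(HD)=m+1$. Then the only feasible solution of $(P)$ is $x=0$, and $(D)$ is strictly feasible (has a positive definite feasible solution). Consequently $\operatorname{val}(P)=\operatorname{val}(D)=0$.
   Context: $(P)$: $\sup\{c^Tx:\sum_{i=1}^mx_iA_i\preceq B\}$, $(D)$: $\inf\{B\bullet Y:A_i\bullet Y=c_i\ \forall i,\ Y\succeq0\}$, $(HD)$: $\{Y\succeq0: A_i\bullet Y=0\ (i=1,\dots,m),\ B\bullet Y=0\}$, with $A_i,B\in\mathcal S^n$, $c\in\mathbb R^m$, $S\bullet T=\operatorname{trace}(ST)$. Standing assumption: $(P)$ is feasible, $A_1,\dots,A_m,B$ are linearly independent, $B=I_r\oplus0$ with $0\le r<n$, and $B$ is a maximum-rank slack $B-\sum_ix_iA_i\succeq0$ of $(P)$. Singularity degree $d(H\cap K)$ (for closed convex cone $K$, affine subspace $H$ with $H\cap K\neq\emptyset$): least $k$ such that there are $y_i\in F_{i-1}^*\cap H^\perp$ with $F_0=K$, $F_i=F_{i-1}\cap y_i^\perp$ and $F_k$ equal to the smallest face of $K$ containing $H\cap K$; $K^*=\{y:\langle y,x\rangle\ge0\ \forall x\in K\}$, $H^\perp=\{y:\langle y,x\rangle=0\ \forall x\in H\}$. $d(HD)$ is the singularity degree of the feasible set of $(HD)$ (with $K=\mathcal S^n_+$). *)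

theory Defs
  imports "Jordan_Normal_Form.DL_Rank" "HOL-Library.Extended_Real"
begin

definition sym_mats :: "nat \<Rightarrow> real mat set" where
  "sym_mats n = {A. A \<in> carrier_mat n n \<and> transpose_mat A = A}"

definition psd_cone :: "nat \<Rightarrow> real mat set" where
  "psd_cone n = {A \<in> sym_mats n. \<forall>v \<in> carrier_vec n. v \<bullet> (A *\<^sub>v v) \<ge> 0}"

definition pos_def :: "nat \<Rightarrow> real mat \<Rightarrow> bool" where
  "pos_def n A \<longleftrightarrow> A \<in> sym_mats n \<and>
     (\<forall>v \<in> carrier_vec n. v \<noteq> 0\<^sub>v n \<longrightarrow> v \<bullet> (A *\<^sub>v v) > 0)"

definition mtrace :: "real mat \<Rightarrow> real" where
  "mtrace A = (\<Sum>i<dim_row A. A $$ (i,i))"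

definition minner :: "real mat \<Rightarrow> real mat \<Rightarrow> real" where
  "minner S T = mtrace (S * T)"

definition mlincomb :: "nat \<Rightarrow> nat \<Rightarrow> (nat \<Rightarrow> real) \<Rightarrow> (nat \<Rightarrow> real mat) \<Rightarrow> real mat" where
  "mlincomb n m x A = mat n n (\<lambda>(j,k). \<Sum>i<m. x i * A i $$ (j,k))"

definition block_id :: "nat \<Rightarrow> nat \<Rightarrow> real mat" where
  "block_id n r = mat n n (\<lambda>(j,k). if j = k \<and> j < r then 1 else 0)"

definition mrank :: "nat \<Rightarrow> real mat \<Rightarrow> nat" where
  "mrank n A = vec_space.rank n A"

definition dual_cone :: "nat \<Rightarrow> real mat set \<Rightarrow> real mat set" where
  "dual_cone n F = {Y \<in> sym_mats n. \<forall>X \<in> F. minner Y X \<ge> 0}"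

definition orth :: "nat \<Rightarrow> real mat set \<Rightarrow> real mat set" where
  "orth n H = {Y \<in> sym_mats n. \<forall>X \<in> H. minner Y X = 0}"

definition is_face :: "real mat set \<Rightarrow> real mat set \<Rightarrow> bool" where
  "is_face K F \<longleftrightarrow> F \<subseteq> K \<and>
     (\<forall>x \<in> F. \<forall>y \<in> F. \<forall>t::real. 0 \<le> t \<and> t \<le> 1 \<longrightarrow> (1 - t) \<cdot>\<^sub>m x + t \<cdot>\<^sub>m y \<in> F) \<and>
     (\<forall>x \<in> K. \<forall>y \<in> K. \<forall>t::real. 0 < t \<and> t < 1 \<and> (1 - t) \<cdot>\<^sub>m x + t \<cdot>\<^sub>m y \<in> F
        \<longrightarrow> x \<in> F \<and> y \<in> F)"

definition min_face :: "real mat set \<Rightarrow> real mat set \<Rightarrow> real mat set" where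
  "min_face K S = \<Inter>{F. is_face K F \<and> S \<subseteq> F}"

(* F_0 = K, F_{i} = F_{i-1} \<inter> y_i^\<perp>; here y_{i+1} = ys i *)
primrec face_chain :: "real mat set \<Rightarrow> (nat \<Rightarrow> real mat) \<Rightarrow> nat \<Rightarrow> real mat set" where
  "face_chain K ys 0 = K"
| "face_chain K ys (Suc i) = face_chain K ys i \<inter> {X. minner (ys i) X = 0}"

definition facial_reduction_in :: "nat \<Rightarrow> real mat set \<Rightarrow> real mat set \<Rightarrow> nat \<Rightarrow> bool" where
  "facial_reduction_in n K H k \<longleftrightarrow> (\<exists>ys.
     (\<forall>i<k. ys i \<in> dual_cone n (face_chain K ys i) \<inter> orth n H) \<and>
     face_chain K ys k = min_face K (H \<inter> K))"

definition sing_degree_is :: "nat \<Rightarrow> real mat set \<Rightarrow> real mat set \<Rightarrow> nat \<Rightarrow> bool" where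
  "sing_degree_is n K H k \<longleftrightarrow> facial_reduction_in n K H k \<and> (\<forall>j<k. \<not> facial_reduction_in n K H j)"

(* the data (A_1..A_m = A 0..A (m-1), B, c) *)
definition P_feasible :: "nat \<Rightarrow> nat \<Rightarrow> (nat \<Rightarrow> real mat) \<Rightarrow> real mat \<Rightarrow> (nat \<Rightarrow> real) \<Rightarrow> bool" where
  "P_feasible n m A B x \<longleftrightarrow> B - mlincomb n m x A \<in> psd_cone n"

definition D_feasible :: "nat \<Rightarrow> nat \<Rightarrow> (nat \<Rightarrow> real mat) \<Rightarrow> (nat \<Rightarrow> real) \<Rightarrow> real mat \<Rightarrow> bool" where
  "D_feasible n m A c Y \<longleftrightarrow> Y \<in> psd_cone n \<and> (\<forall>i<m. minner (A i) Y = c i)"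

definition val_P :: "nat \<Rightarrow> nat \<Rightarrow> (nat \<Rightarrow> real mat) \<Rightarrow> real mat \<Rightarrow> (nat \<Rightarrow> real) \<Rightarrow> ereal" where
  "val_P n m A B c = Sup ((\<lambda>x. ereal (\<Sum>i<m. c i * x i)) ` {x. P_feasible n m A B x})"

definition val_D :: "nat \<Rightarrow> nat \<Rightarrow> (nat \<Rightarrow> real mat) \<Rightarrow> real mat \<Rightarrow> (nat \<Rightarrow> real) \<Rightarrow> ereal" where
  "val_D n m A B c = Inf ((\<lambda>Y. ereal (minner B Y)) ` {Y. D_feasible n m A c Y})"

definition HD_space :: "nat \<Rightarrow> nat \<Rightarrow> (nat \<Rightarrow> real mat) \<Rightarrow> real mat \<Rightarrow> real mat set" where
  "HD_space n m A B = {Y \<in> sym_mats n. (\<forall>i<m. minner (A i) Y = 0) \<and> minner B Y = 0}"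

definition lin_indep_data :: "nat \<Rightarrow> nat \<Rightarrow> (nat \<Rightarrow> real mat) \<Rightarrow> real mat \<Rightarrow> bool" where
  "lin_indep_data n m A B \<longleftrightarrow> (\<forall>(a::nat \<Rightarrow> real) b.
     mlincomb n m a A + b \<cdot>\<^sub>m B = 0\<^sub>m n n \<longrightarrow> (\<forall>i<m. a i = 0) \<and> b = 0)"

end

theory Submission imports Defs begin

definition ip :: "nat \<Rightarrow> real mat \<Rightarrow> real mat \<Rightarrow> real" where
  "ip n X Y = (\<Sum>a<n. \<Sum>b<n. X $$ (a,b) * Y $$ (b,a))"

lemma minner_ip:
  assumes "X \<in> carrier_mat n n" "Y \<in> carrier_mat n n"
  shows "minner X Y = ip n X Y"
proof -
  have "minner X Y = (\<Sum>i<n. (X*Y) $$ (i,i))" using assms unfolding minner_def mtrace_def by simp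
  also have "\<dots> = ip n X Y" unfolding ip_def
    using assms by (intro sum.cong refl) (auto simp: scalar_prod_def col_def row_def atLeast0LessThan)
  finally show ?thesis .
qed

lemma ip_comm: "ip n X Y = ip n Y X"
  unfolding ip_def by (subst sum.swap) (simp add: mult.commute)

lemma minner_comm:
  assumes "X \<in> carrier_mat n n" "Y \<in> carrier_mat n n"
  shows "minner X Y = minner Y X"
  using assms by (simp add: minner_ip ip_comm)

lemma quad_sum:
  assumes "A \<in> carrier_mat n n" "v \<in> carrier_vec n"
  shows "v \<bullet> (A *\<^sub>v v) = (\<Sum>a<n. \<Sum>b<n. v $ a * A $$ (a,b) * v $ b)"
  using assms by (auto simp: scalar_prod_def row_def atLeast0LessThan sum_distrib_left mult.assoc intro!: sum.cong)

lemma mlincomb_carrier[simp]: "mlincomb n N c vs \<in> carrier_mat n n"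
  unfolding mlincomb_def by simp

lemma mlincomb_dims[simp]: "dim_row (mlincomb n N c vs) = n" "dim_col (mlincomb n N c vs) = n"
  unfolding mlincomb_def by simp_all

lemma mlincomb_index: "a < n \<Longrightarrow> b < n \<Longrightarrow> mlincomb n N c vs $$ (a,b) = (\<Sum>i<N. c i * vs i $$ (a,b))"
  unfolding mlincomb_def by simp

lemma ip_mlincomb_left:
  "ip n (mlincomb n N c vs) Y = (\<Sum>i<N. c i * ip n (vs i) Y)"
  unfolding ip_def by (simp add: mlincomb_index sum_distrib_left sum_distrib_right mult.assoc)
     (subst sum.swap, rule sum.cong, simp, subst sum.swap, simp)


lemma ip_add_left: "X \<in> carrier_mat n n \<Longrightarrow> Y \<in> carrier_mat n n \<Longrightarrow> ip n (X + Y) Z = ip n X Z + ip n Y Z"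
  unfolding ip_def by (simp add: distrib_right sum.distrib)

lemma ip_minus_left: "X \<in> carrier_mat n n \<Longrightarrow> Y \<in> carrier_mat n n \<Longrightarrow> ip n (X - Y) Z = ip n X Z - ip n Y Z"
  unfolding ip_def by (simp add: left_diff_distrib sum_subtractf)

lemma ip_smult_left: "X \<in> carrier_mat n n \<Longrightarrow> ip n (c \<cdot>\<^sub>m X) Z = c * ip n X Z"
  unfolding ip_def by (simp add: sum_distrib_left mult.assoc)

lemma ip_one_right: "ip n X (1\<^sub>m n) = (\<Sum>a<n. X $$ (a,a))"
  unfolding ip_def by (simp add: if_distrib cong: if_cong)

lemma sym_idx: "X \<in> sym_mats n \<Longrightarrow> a < n \<Longrightarrow> b < n \<Longrightarrow> X $$ (a,b) = X $$ (b,a)"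
  unfolding sym_mats_def by (metis (mono_tags, lifting) carrier_matD index_transpose_mat(1) mem_Collect_eq)

lemma sym_carrier: "X \<in> sym_mats n \<Longrightarrow> X \<in> carrier_mat n n"
  unfolding sym_mats_def by auto

lemma ip_self_zero:
  assumes "X \<in> sym_mats n" "ip n X X = 0"
  shows "X = 0\<^sub>m n n"
proof -
  have e: "ip n X X = (\<Sum>a<n. \<Sum>b<n. (X $$ (a,b))^2)"
    unfolding ip_def using sym_idx[OF assms(1)] by (auto simp: power2_eq_square intro!: sum.cong)
  have "\<forall>a\<in>{..<n}. (\<Sum>b<n. (X $$ (a,b))^2) = 0"
    using assms(2) unfolding e by (subst sum_nonneg_eq_0_iff[symmetric]) (auto intro: sum_nonneg)
  hence "\<And>a b. a < n \<Longrightarrow> b < n \<Longrightarrow> X $$ (a,b) = 0"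
    by (subst (asm) sum_nonneg_eq_0_iff) auto
  thus ?thesis using sym_carrier[OF assms(1)] by (intro eq_matI) auto
qed

lemma psd_sym: "X \<in> psd_cone n \<Longrightarrow> X \<in> sym_mats n" unfolding psd_cone_def by auto

lemma if10_mult[simp]: "(if P then (1::real) else 0) * x = (if P then x else 0)"
  "x * (if P then (1::real) else 0) = (if P then x else 0)" by auto

lemma quad_unit:
  fixes X :: "real mat"
  assumes "X \<in> carrier_mat n n" "a < n"
  shows "unit_vec n a \<bullet> (X *\<^sub>v unit_vec n a) = X $$ (a,a)"
proof -
  have c: "X *\<^sub>v unit_vec n a \<in> carrier_vec n" using assms by simp
  show ?thesis using scalar_prod_left_unit[OF c assms(2)] assms
    by (simp add: scalar_prod_right_unit)
qed

lemma psd_diag: "X \<in> psd_cone n \<Longrightarrow> a < n \<Longrightarrow> X $$ (a,a) \<ge> 0"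
  using quad_unit[OF sym_carrier[OF psd_sym]] unfolding psd_cone_def
  by (metis (no_types, lifting) mem_Collect_eq unit_vec_carrier)

lemma pd_diag: "pos_def n X \<Longrightarrow> a < n \<Longrightarrow> X $$ (a,a) > 0"
proof -
  assume p: "pos_def n X" and a: "a < n"
  have "unit_vec n a \<noteq> 0\<^sub>v n" using a
    by (metis index_unit_vec(1) index_zero_vec(1) zero_neq_one)
  thus ?thesis using p a quad_unit[of X n a] unfolding pos_def_def
    by (metis sym_carrier unit_vec_carrier)
qed

lemma block_id_carrier: "block_id n r \<in> carrier_mat n n" unfolding block_id_def by simp

lemma block_id_sym: "block_id n r \<in> sym_mats n"
  unfolding sym_mats_def block_id_def by (auto intro!: eq_matI)

lemma ip_block: "r \<le> n \<Longrightarrow> ip n (block_id n r) Y = (\<Sum>a<r. Y $$ (a,a))"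
  unfolding ip_def block_id_def
  by (simp add: if_distrib if_distribR cong: if_cong) (rule sum.mono_neutral_cong_right, auto)


lemma if_conj_distrib: "(if P \<and> R then x else (0::real)) = (if P then (if R then x else 0) else 0)" by auto

lemma sum_if_const: "(\<Sum>b\<in>S. if P then f b else 0) = (if P then sum f S else (0::real))"
  by (cases P) auto

definition Q :: "nat \<Rightarrow> real mat \<Rightarrow> (nat \<Rightarrow> real) \<Rightarrow> real" where
  "Q n X v = (\<Sum>a<n. \<Sum>b<n. v a * X $$ (a,b) * v b)"

lemma Q_expand:
  assumes "j < n"
  shows "Q n X (\<lambda>a. v a + t * (if a = j then 1 else 0)) =
     Q n X v + t * (\<Sum>b<n. X $$ (j,b) * v b) + t * (\<Sum>a<n. v a * X $$ (a,j)) + t^2 * X $$ (j,j)"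
proof -
  have "Q n X (\<lambda>a. v a + t * (if a = j then 1 else 0)) =
     (\<Sum>a<n. \<Sum>b<n. v a * X $$ (a,b) * v b + (if a = j then t * X $$ (j,b) * v b else 0)
        + (if b = j then t * v a * X $$ (a,j) else 0) + (if a = j \<and> b = j then t^2 * X $$ (j,j) else 0))"
    unfolding Q_def by (intro sum.cong refl) (auto simp: algebra_simps power2_eq_square)
  also have "\<dots> = Q n X v + (\<Sum>a<n. \<Sum>b<n. (if a = j then t * X $$ (j,b) * v b else 0))
      + (\<Sum>a<n. \<Sum>b<n. (if b = j then t * v a * X $$ (a,j) else 0))
      + (\<Sum>a<n. \<Sum>b<n. (if a = j \<and> b = j then t^2 * X $$ (j,j) else 0))"
    unfolding Q_def by (simp only: sum.distrib)
  also have "(\<Sum>a<n. \<Sum>b<n. (if a = j then t * X $$ (j,b) * v b else 0)) = t * (\<Sum>b<n. X $$ (j,b) * v b)"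
    using assms by (simp only: sum_if_const) (simp add: sum_distrib_left mult.assoc)
  also have "(\<Sum>a<n. \<Sum>b<n. (if b = j then t * v a * X $$ (a,j) else 0)) = t * (\<Sum>a<n. v a * X $$ (a,j))"
    using assms by (simp add: sum_distrib_left mult.assoc)
  also have "(\<Sum>a<n. \<Sum>b<n. (if a = j \<and> b = j then t^2 * X $$ (j,j) else 0)) = t^2 * X $$ (j,j)"
    using assms by (simp add: if_conj_distrib sum_if_const)
  finally show ?thesis .
qed

lemma psd_Q: "X \<in> psd_cone n \<Longrightarrow> Q n X v \<ge> 0"
proof -
  assume p: "X \<in> psd_cone n"
  have c: "X \<in> carrier_mat n n" using p psd_sym sym_carrier by blast
  have "vec n v \<bullet> (X *\<^sub>v vec n v) \<ge> 0" using p unfolding psd_cone_def by auto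
  thus ?thesis unfolding quad_sum[OF c vec_carrier] Q_def by simp
qed

lemma Q_psd: "X \<in> sym_mats n \<Longrightarrow> (\<And>v. Q n X v \<ge> 0) \<Longrightarrow> X \<in> psd_cone n"
  unfolding psd_cone_def using quad_sum[OF sym_carrier] unfolding Q_def by auto


lemma psd_dual_aux:
  fixes W :: "real mat"
  assumes W: "W \<in> psd_cone n" and jn: "j \<le> n"
  shows "\<forall>X. X \<in> psd_cone n \<and> (\<forall>a b. a<n \<longrightarrow> b<n \<longrightarrow> (a<j \<or> b<j) \<longrightarrow> X$$(a,b) = 0) \<longrightarrow> ip n W X \<ge> 0"
  using jn
proof (induction j rule: inc_induct)
  case base
  show ?case unfolding ip_def by auto
next
  case (step j)
  show ?case
  proof (intro allI impI, elim conjE)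
    fix X assume Xp: "X \<in> psd_cone n" and Z: "\<forall>a b. a<n \<longrightarrow> b<n \<longrightarrow> (a<j \<or> b<j) \<longrightarrow> X$$(a,b) = 0"
    have Xs: "X \<in> sym_mats n" using Xp psd_sym by blast
    have Xc: "X \<in> carrier_mat n n" using Xs sym_carrier by blast
    define x where "x = (\<lambda>b. X $$ (j,b))"
    define d where "d = X $$ (j,j)"
    have jn: "j < n" using step by auto
    have key: "Q n X v + 2 * t * (\<Sum>b<n. x b * v b) + t^2 * d \<ge> 0" for v t
    proof -
      have "(\<Sum>a<n. v a * X $$ (a,j)) = (\<Sum>b<n. x b * v b)"
        unfolding x_def using sym_idx[OF Xs _ jn] by (auto simp: mult.commute intro!: sum.cong)
      thus ?thesis using psd_Q[OF Xp, of "\<lambda>a. v a + t * (if a = j then 1 else 0)"] Q_expand[OF jn, of X v t]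
        unfolding x_def d_def by simp
    qed
    have d0: "d \<ge> 0" unfolding d_def using psd_diag[OF Xp jn] .
    show "ip n W X \<ge> 0"
    proof (cases "d = 0")
      case True
      define S where "S = (\<Sum>b<n. x b * x b)"
      have S0: "S \<ge> 0" unfolding S_def by (auto intro: sum_nonneg)
      have "S = 0"
      proof (rule ccontr)
        assume "S \<noteq> 0" hence Sp: "S > 0" using S0 by auto
        have qx: "Q n X x \<ge> 0" using psd_Q[OF Xp] .
        have "Q n X x + 2 * (- (Q n X x + 1) / (2 * S)) * S + (- (Q n X x + 1) / (2 * S))^2 * d \<ge> 0"
          using key[of x "- (Q n X x + 1) / (2 * S)"] unfolding S_def by simp
        hence "Q n X x - (Q n X x + 1) \<ge> 0" using Sp True by (simp add: field_simps)
        thus False by simp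
      qed
      hence x0: "\<forall>b<n. x b = 0" unfolding S_def by (subst (asm) sum_nonneg_eq_0_iff) auto
      have "\<forall>a b. a<n \<longrightarrow> b<n \<longrightarrow> (a<Suc j \<or> b<Suc j) \<longrightarrow> X$$(a,b) = 0"
      proof (intro allI impI)
        fix a b assume ab: "a < n" "b < n" "a < Suc j \<or> b < Suc j"
        show "X $$ (a,b) = 0"
        proof (cases "a < j \<or> b < j")
          case True thus ?thesis using Z ab by auto
        next
          case False
          hence "a = j \<or> b = j" using ab by auto
          thus ?thesis using x0 ab sym_idx[OF Xs] unfolding x_def by metis
        qed
      qed
      thus ?thesis using step.IH Xp by blast
    next
      case False
      hence dp: "d > 0" using d0 by auto
      define X' where "X' = mat n n (\<lambda>(a,b). X$$(a,b) - x a * x b / d)"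
      have X's: "X' \<in> sym_mats n" unfolding sym_mats_def X'_def
        using sym_idx[OF Xs] by (auto intro!: eq_matI simp: mult.commute)
      have QX': "Q n X' v = Q n X v - (\<Sum>b<n. x b * v b)^2 / d" for v
      proof -
        have "Q n X' v = (\<Sum>a<n. \<Sum>b<n. v a * X $$ (a,b) * v b - (v a * x a) * (x b * v b) / d)"
          unfolding Q_def X'_def by (intro sum.cong refl) (auto simp: algebra_simps)
        also have "\<dots> = Q n X v - (\<Sum>a<n. v a * x a) * (\<Sum>b<n. x b * v b) / d"
          unfolding Q_def by (simp add: sum_subtractf sum_divide_distrib sum_distrib_left sum_distrib_right) (subst sum.swap, simp)
        finally show ?thesis by (simp add: power2_eq_square mult.commute)
      qed
      have X'p: "X' \<in> psd_cone n"
      proof (rule Q_psd[OF X's])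
        fix v
        define s where "s = (\<Sum>b<n. x b * v b)"
        have "Q n X v + 2 * (-s/d) * s + (-s/d)^2 * d \<ge> 0" using key[of v "-s/d"] unfolding s_def by simp
        hence "Q n X v - s^2/d \<ge> 0" using dp by (simp add: field_simps power2_eq_square)
        thus "Q n X' v \<ge> 0" unfolding QX' s_def .
      qed
      have "\<forall>a b. a<n \<longrightarrow> b<n \<longrightarrow> (a<Suc j \<or> b<Suc j) \<longrightarrow> X'$$(a,b) = 0"
      proof (intro allI impI)
        fix a b assume ab: "a < n" "b < n" "a < Suc j \<or> b < Suc j"
        have xa: "a < j \<Longrightarrow> x a = 0" using Z ab jn sym_idx[OF Xs] unfolding x_def by metis
        have xb: "b < j \<Longrightarrow> x b = 0" using Z ab jn sym_idx[OF Xs] unfolding x_def by metis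
        show "X' $$ (a,b) = 0"
        proof (cases "a < j \<or> b < j")
          case True thus ?thesis using Z ab xa xb unfolding X'_def by auto
        next
          case False
          hence "a = j \<or> b = j" using ab by auto
          thus ?thesis using ab dp sym_idx[OF Xs] unfolding X'_def x_def d_def by auto
        qed
      qed
      hence ipX': "ip n W X' \<ge> 0" using step.IH X'p by blast
      have "ip n W X = ip n W X' + Q n W x / d"
      proof -
        have "ip n W X = (\<Sum>a<n. \<Sum>b<n. W $$ (a,b) * X' $$ (b,a) + x a * W $$ (a,b) * x b / d)"
          unfolding ip_def X'_def by (intro sum.cong refl) (auto simp: algebra_simps)
        thus ?thesis unfolding ip_def Q_def by (simp add: sum.distrib sum_divide_distrib)
      qed
      moreover have "Q n W x / d \<ge> 0" using psd_Q[OF W] dp by auto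
      ultimately show ?thesis using ipX' by auto
    qed
  qed
qed

lemma psd_dual: "W \<in> psd_cone n \<Longrightarrow> X \<in> psd_cone n \<Longrightarrow> ip n W X \<ge> 0"
  using psd_dual_aux[of W n 0] by auto


lemma det_zero_row_mat:
  fixes M :: "real mat"
  assumes M: "M \<in> carrier_mat N N" and k: "k < N" and z: "\<forall>j<N. M $$ (k,j) = 0"
  shows "det M = 0"
proof -
  have "M = mat\<^sub>r N N (\<lambda>i. if i = k then 0\<^sub>v N else row M i)"
    using M z by (intro eq_matI) auto
  moreover have "det (mat\<^sub>r N N (\<lambda>i. if i = k then 0\<^sub>v N else row M i)) = 0"
    by (rule det_row_0[OF k]) (use M in auto)
  ultimately show ?thesis by simp
qed

lemma mlincomb_sym: "\<forall>i<N. vs i \<in> sym_mats n \<Longrightarrow> mlincomb n N c vs \<in> sym_mats n"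
  unfolding sym_mats_def mlincomb_def
  by (auto intro!: eq_matI sum.cong) (metis carrier_matD index_transpose_mat(1))

lemma sym_ip_minner: "X \<in> sym_mats n \<Longrightarrow> Y \<in> carrier_mat n n \<Longrightarrow> minner X Y = ip n X Y"
  using minner_ip sym_carrier by blast

lemma orth_sym: "Y \<in> orth n H \<Longrightarrow> Y \<in> sym_mats n" unfolding orth_def by auto

lemma dep_lemma:
  assumes A_sym: "\<forall>i<m. A i \<in> sym_mats n" and Bs: "B \<in> sym_mats n"
    and vs: "\<forall>i<N. vs i \<in> orth n (HD_space n m A B)" and N: "N > m + 1"
  shows "\<exists>c. (\<exists>i<N. c i \<noteq> 0) \<and> (\<forall>X\<in>carrier_mat n n. (\<Sum>i<N. c i * minner (vs i) X) = 0)"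
proof -
  define M where "M = mat N N (\<lambda>(j,i). if j < m then minner (A j) (vs i) else if j = m then minner B (vs i) else 0)"
  have Mc: "M \<in> carrier_mat N N" unfolding M_def by simp
  have "det M = 0" by (rule det_zero_row_mat[OF Mc, of "m+1"]) (use N in \<open>auto simp: M_def\<close>)
  then obtain v where v: "v \<in> carrier_vec N" "v \<noteq> 0\<^sub>v N" "M *\<^sub>v v = 0\<^sub>v N"
    using det_0_iff_vec_prod_zero_field[OF Mc] by blast
  define c where "c = (\<lambda>i. v $ i)"
  have cnz: "\<exists>i<N. c i \<noteq> 0"
  proof (rule ccontr)
    assume "\<not> ?thesis" hence "v = 0\<^sub>v N" using v(1) unfolding c_def by (intro eq_vecI) auto
    thus False using v(2) by simp
  qed
  have row0: "(\<Sum>i<N. M $$ (j,i) * c i) = 0" if "j < N" for j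
  proof -
    have "(M *\<^sub>v v) $ j = 0" using v(3) that by simp
    thus ?thesis using that Mc v(1) unfolding c_def
      by (simp add: scalar_prod_def row_def atLeast0LessThan)
  qed
  have vsym: "\<forall>i<N. vs i \<in> sym_mats n" using vs orth_sym by blast
  define S where "S = mlincomb n N c vs"
  have Ss: "S \<in> sym_mats n" unfolding S_def using mlincomb_sym[OF vsym] .
  have Sc: "S \<in> carrier_mat n n" using Ss sym_carrier by blast
  have lin: "minner Z S = (\<Sum>i<N. c i * minner Z (vs i))" if "Z \<in> sym_mats n" for Z
  proof -
    have "minner Z S = ip n S Z" using sym_ip_minner[OF that Sc] ip_comm by simp
    also have "\<dots> = (\<Sum>i<N. c i * ip n (vs i) Z)" unfolding S_def by (rule ip_mlincomb_left)
    also have "\<dots> = (\<Sum>i<N. c i * minner Z (vs i))"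
      using vsym that by (intro sum.cong refl) (simp add: sym_ip_minner sym_carrier ip_comm)
    finally show ?thesis .
  qed
  have SH: "S \<in> HD_space n m A B"
  proof -
    have "minner (A j) S = 0" if "j < m" for j
    proof -
      have "minner (A j) S = (\<Sum>i<N. M $$ (j,i) * c i)"
        using lin[of "A j"] A_sym that N by (auto simp: M_def mult.commute intro!: sum.cong)
      thus ?thesis using row0[of j] that N by simp
    qed
    moreover have "minner B S = 0"
    proof -
      have "minner B S = (\<Sum>i<N. M $$ (m,i) * c i)"
        using lin[of B] Bs N by (auto simp: M_def mult.commute intro!: sum.cong)
      thus ?thesis using row0[of m] N by simp
    qed
    ultimately show ?thesis unfolding HD_space_def using Ss by auto
  qed
  have "ip n S S = (\<Sum>i<N. c i * ip n (vs i) S)" unfolding S_def by (rule ip_mlincomb_left)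
  also have "\<dots> = 0"
  proof (intro sum.neutral ballI)
    fix i assume "i \<in> {..<N}"
    hence "minner (vs i) S = 0" using vs SH unfolding orth_def by auto
    thus "c i * ip n (vs i) S = 0" using vsym \<open>i \<in> {..<N}\<close> Sc sym_ip_minner by (metis lessThan_iff mult_zero_right)
  qed
  finally have "S = 0\<^sub>m n n" using ip_self_zero[OF Ss] by simp
  have "(\<Sum>i<N. c i * minner (vs i) X) = 0" if X: "X \<in> carrier_mat n n" for X
  proof -
    have "(\<Sum>i<N. c i * minner (vs i) X) = ip n S X"
      unfolding S_def ip_mlincomb_left using vsym X by (intro sum.cong refl) (simp add: sym_ip_minner)
    also have "\<dots> = 0" using \<open>S = 0\<^sub>m n n\<close> unfolding ip_def by simp
    finally show ?thesis .
  qed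
  thus ?thesis using cnz by blast
qed


lemma chain_mono: "i \<le> j \<Longrightarrow> face_chain S vs j \<subseteq> face_chain S vs i"
  by (induction j rule: dec_induct) auto

lemma chain_sub: "face_chain S vs j \<subseteq> S"
  using chain_mono[of 0 j S vs] by simp

lemma chain_orth: "i < j \<Longrightarrow> X \<in> face_chain S vs j \<Longrightarrow> minner (vs i) X = 0"
  using chain_mono[of "Suc i" j S vs] by auto

lemma strict_indep:
  assumes strict: "\<forall>i<N. \<exists>X\<in>face_chain S vs i. minner (vs i) X \<noteq> 0"
    and rel: "\<forall>X\<in>S. (\<Sum>i<N. c i * minner (vs i) X) = 0"
  shows "\<forall>i<N. c i = 0"
proof (rule ccontr)
  assume nt: "\<not> (\<forall>i<N. c i = 0)"
  define J where "J = {i. i < N \<and> c i \<noteq> 0}"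
  have Jf: "finite J" "J \<noteq> {}" using nt unfolding J_def by auto
  define j where "j = Max J"
  have jJ: "j \<in> J" unfolding j_def using Jf by simp
  have jmax: "\<And>i. i \<in> J \<Longrightarrow> i \<le> j" unfolding j_def using Jf by simp
  obtain X where X: "X \<in> face_chain S vs j" "minner (vs j) X \<noteq> 0" using strict jJ unfolding J_def by auto
  have XS: "X \<in> S" using X chain_sub by blast
  have "(\<Sum>i<N. c i * minner (vs i) X) = c j * minner (vs j) X"
  proof -
    have jN: "j < N" using jJ unfolding J_def by auto
    have "(\<Sum>i<N. c i * minner (vs i) X) = c j * minner (vs j) X + (\<Sum>i\<in>{..<N} - {j}. c i * minner (vs i) X)"
      using jN by (subst sum.remove[of _ j]) auto
    also have "(\<Sum>i\<in>{..<N} - {j}. c i * minner (vs i) X) = 0"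
    proof (intro sum.neutral ballI)
      fix i assume i: "i \<in> {..<N} - {j}"
      show "c i * minner (vs i) X = 0"
      proof (cases "i < j")
        case True thus ?thesis using chain_orth[OF True X(1)] by simp
      next
        case False
        hence "i \<notin> J" using jmax i by force
        thus ?thesis using i unfolding J_def by auto
      qed
    qed
    finally show ?thesis by simp
  qed
  hence "c j * minner (vs j) X = 0" using rel XS by auto
  thus False using X(2) jJ unfolding J_def by auto
qed


lemma fr_delete:
  assumes valid: "\<forall>i<Suc k. ys i \<in> dual_cone n (face_chain K ys i) \<inter> orth n H"
    and fin: "face_chain K ys (Suc k) = min_face K (H \<inter> K)"
    and p: "p \<le> k" and eq: "face_chain K ys (Suc p) = face_chain K ys p"
  shows "facial_reduction_in n K H k"
proof -
  define ys' where "ys' = (\<lambda>i. if i < p then ys i else ys (Suc i))"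
  have c1: "i \<le> p \<Longrightarrow> face_chain K ys' i = face_chain K ys i" for i
    by (induction i) (auto simp: ys'_def)
  have c2: "p \<le> i \<Longrightarrow> face_chain K ys' i = face_chain K ys (Suc i)" for i
  proof (induction i rule: dec_induct)
    case base thus ?case using c1[of p] eq by simp
  next
    case (step i) thus ?case by (simp add: ys'_def)
  qed
  have "\<forall>i<k. ys' i \<in> dual_cone n (face_chain K ys' i) \<inter> orth n H"
  proof (intro allI impI)
    fix i assume i: "i < k"
    show "ys' i \<in> dual_cone n (face_chain K ys' i) \<inter> orth n H"
    proof (cases "i < p")
      case True thus ?thesis using c1[of i] valid i by (simp add: ys'_def)
    next
      case False
      have e1: "ys' i = ys (Suc i)" using False by (simp add: ys'_def)
      have e2: "face_chain K ys' i = face_chain K ys (Suc i)" using c2[of i] False by linarith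
      have "Suc i < Suc k" using i by simp
      hence "ys (Suc i) \<in> dual_cone n (face_chain K ys (Suc i)) \<inter> orth n H" using valid by blast
      thus ?thesis unfolding e1 e2 .
    qed
  qed
  moreover have "face_chain K ys' k = min_face K (H \<inter> K)" using c2[OF p] fin by simp
  ultimately show ?thesis unfolding facial_reduction_in_def by blast
qed

lemma minimal_strict:
  assumes valid: "\<forall>i<Suc k. ys i \<in> dual_cone n (face_chain K ys i) \<inter> orth n H"
    and fin: "face_chain K ys (Suc k) = min_face K (H \<inter> K)"
    and minl: "\<not> facial_reduction_in n K H k"
  shows "\<forall>p<Suc k. \<exists>X\<in>face_chain K ys p. minner (ys p) X \<noteq> 0"
proof (intro allI impI)
  fix p assume p: "p < Suc k"
  show "\<exists>X\<in>face_chain K ys p. minner (ys p) X \<noteq> 0"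
  proof (rule ccontr)
    assume "\<not> (\<exists>X\<in>face_chain K ys p. minner (ys p) X \<noteq> 0)"
    hence e: "face_chain K ys (Suc p) = face_chain K ys p" by auto
    thus False using fr_delete[OF valid fin _ e] p minl by auto
  qed
qed


lemma dual_anti: "F \<subseteq> G \<Longrightarrow> dual_cone n G \<subseteq> dual_cone n F"
  unfolding dual_cone_def by auto

lemma sym_add: "X \<in> sym_mats n \<Longrightarrow> Y \<in> sym_mats n \<Longrightarrow> X + Y \<in> sym_mats n"
  unfolding sym_mats_def by (auto simp: transpose_add)

lemma minner_add_left: "X \<in> carrier_mat n n \<Longrightarrow> Y \<in> carrier_mat n n \<Longrightarrow> Z \<in> carrier_mat n n \<Longrightarrow>
  minner (X + Y) Z = minner X Z + minner Y Z"
proof -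
  assume a: "X \<in> carrier_mat n n" "Y \<in> carrier_mat n n" "Z \<in> carrier_mat n n"
  hence "minner (X + Y) Z = ip n (X + Y) Z" by (intro minner_ip) auto
  thus ?thesis using a by (simp add: minner_ip ip_add_left)
qed

lemma psd_carrier: "X \<in> psd_cone n \<Longrightarrow> X \<in> carrier_mat n n"
  using psd_sym sym_carrier by blast

lemma core:
  assumes A_sym: "\<forall>i<m. A i \<in> sym_mats n" and Bs: "B \<in> sym_mats n"
    and valid: "\<forall>i<Suc m. ys i \<in> dual_cone n (face_chain (psd_cone n) ys i) \<inter> orth n (HD_space n m A B)"
    and fin: "face_chain (psd_cone n) ys (Suc m) = min_face (psd_cone n) (HD_space n m A B \<inter> psd_cone n)"
    and minl: "\<forall>j<Suc m. \<not> facial_reduction_in n (psd_cone n) (HD_space n m A B) j"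
    and W: "W \<in> dual_cone n (psd_cone n) \<inter> orth n (HD_space n m A B)"
  shows "\<exists>t. \<forall>X\<in>carrier_mat n n. minner W X = t * minner (ys 0) X"
proof -
  define K where "K = psd_cone n"
  define H where "H = HD_space n m A B"
  note defs = K_def[symmetric] H_def[symmetric]
  have KC: "K \<subseteq> carrier_mat n n" unfolding K_def using psd_carrier by blast
  have ysstrict: "\<forall>p<Suc m. \<exists>X\<in>face_chain K ys p. minner (ys p) X \<noteq> 0"
    using minimal_strict[of m ys n K H] valid fin minl unfolding defs by auto
  have ysorth: "\<forall>i<Suc m. ys i \<in> orth n H" using valid unfolding defs by auto
  have yssym: "\<forall>i<Suc m. ys i \<in> sym_mats n" using ysorth orth_sym by blast
  have Worth: "W \<in> orth n H" and Wsym: "W \<in> sym_mats n" and Wdual: "W \<in> dual_cone n K"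
    using W orth_sym unfolding defs by auto
  obtain d where d: "\<forall>X\<in>carrier_mat n n. minner W X = (\<Sum>i<Suc m. d i * minner (ys i) X)"
  proof -
    define vs where "vs = (\<lambda>i. if i < Suc m then ys i else W)"
    have "\<forall>i<Suc (Suc m). vs i \<in> orth n (HD_space n m A B)"
      using ysorth Worth unfolding vs_def H_def by auto
    from dep_lemma[OF A_sym Bs this] obtain c where
      c: "\<exists>i<Suc (Suc m). c i \<noteq> 0" "\<forall>X\<in>carrier_mat n n. (\<Sum>i<Suc (Suc m). c i * minner (vs i) X) = 0"
      by auto
    have rel: "(\<Sum>i<Suc m. c i * minner (ys i) X) + c (Suc m) * minner W X = 0" if "X \<in> carrier_mat n n" for X
      using c(2) that unfolding vs_def by (simp add: sum.lessThan_Suc[of _ "Suc m"])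
    have cm: "c (Suc m) \<noteq> 0"
    proof
      assume c0: "c (Suc m) = 0"
      have "\<forall>X\<in>K. (\<Sum>i<Suc m. c i * minner (ys i) X) = 0" using rel c0 KC by auto
      hence "\<forall>i<Suc m. c i = 0" using strict_indep[OF ysstrict] by blast
      thus False using c(1) c0 using less_Suc_eq by auto
    qed
    show ?thesis
    proof (rule that[of "\<lambda>i. - c i / c (Suc m)"], intro ballI)
      fix X :: "real mat" assume X: "X \<in> carrier_mat n n"
      have "minner W X = - (\<Sum>i<Suc m. c i * minner (ys i) X) / c (Suc m)"
        using rel[OF X] cm by (simp add: field_simps)
      moreover have "(\<Sum>i<Suc m. - c i / c (Suc m) * minner (ys i) X) = (\<Sum>i<Suc m. - (c i * minner (ys i) X) / c (Suc m))"
        by (rule sum.cong) auto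
      ultimately show "minner W X = (\<Sum>i<Suc m. - c i / c (Suc m) * minner (ys i) X)"
        by (simp only: sum_divide_distrib[symmetric] sum_negf)
    qed
  qed
  have dual_nonneg: "Y \<in> dual_cone n K \<Longrightarrow> X \<in> K \<Longrightarrow> minner Y X \<ge> 0" for Y X
    unfolding dual_cone_def by auto
  have y0dual: "ys 0 \<in> dual_cone n K" using valid unfolding defs by auto
  define F1 where "F1 = face_chain K ys 1"
  have Wvan: "\<forall>X\<in>F1. minner W X = 0"
  proof (rule ccontr)
    assume "\<not> (\<forall>X\<in>F1. minner W X = 0)"
    then obtain X1 where X1: "X1 \<in> F1" "minner W X1 \<noteq> 0" by auto
    define ys' where "ys' = (\<lambda>i. if i = 0 then ys 0 + W else ys i)"
    have y0c: "ys 0 \<in> carrier_mat n n" using yssym sym_carrier by auto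
    have Wc: "W \<in> carrier_mat n n" using Wsym sym_carrier by auto
    have addK: "X \<in> K \<Longrightarrow> minner (ys 0 + W) X = minner (ys 0) X + minner W X" for X
      using minner_add_left[OF y0c Wc] KC by auto
    have c1: "face_chain K ys' 1 = F1 \<inter> {X. minner W X = 0}"
    proof -
      have "X \<in> K \<Longrightarrow> minner (ys 0 + W) X = 0 \<longleftrightarrow> minner (ys 0) X = 0 \<and> minner W X = 0" for X
        using addK[of X] dual_nonneg[OF y0dual, of X] dual_nonneg[OF Wdual, of X] by auto
      thus ?thesis unfolding F1_def ys'_def by auto
    qed
    have c3: "1 \<le> i \<Longrightarrow> face_chain K ys' i = face_chain K ys i \<inter> {X. minner W X = 0}" for i
    proof (induction i rule: dec_induct)
      case base thus ?case using c1 unfolding F1_def by simp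
    next
      case (step i) thus ?case by (auto simp: ys'_def)
    qed
    have valid': "\<forall>i<Suc m. ys' i \<in> dual_cone n (face_chain K ys' i) \<inter> orth n H"
    proof (intro allI impI)
      fix i assume i: "i < Suc m"
      show "ys' i \<in> dual_cone n (face_chain K ys' i) \<inter> orth n H"
      proof (cases "i = 0")
        case True
        have s: "ys 0 + W \<in> sym_mats n" using sym_add yssym Wsym by auto
        have "ys 0 + W \<in> dual_cone n K"
          unfolding dual_cone_def using s addK dual_nonneg[OF y0dual] dual_nonneg[OF Wdual]
          by (auto intro: add_nonneg_nonneg)
        moreover have "ys 0 + W \<in> orth n H"
        proof -
          have "minner (ys 0 + W) Y = 0" if "Y \<in> H" for Y
          proof -
            have Yc: "Y \<in> carrier_mat n n" using that unfolding H_def HD_space_def using sym_carrier by auto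
            have "minner (ys 0) Y = 0" "minner W Y = 0" using ysorth Worth that unfolding orth_def by auto
            thus ?thesis using minner_add_left[OF y0c Wc Yc] by simp
          qed
          thus ?thesis unfolding orth_def using s by auto
        qed
        ultimately show ?thesis using True by (simp add: ys'_def)
      next
        case False
        hence "face_chain K ys' i \<subseteq> face_chain K ys i" using c3[of i] by auto
        hence "dual_cone n (face_chain K ys i) \<subseteq> dual_cone n (face_chain K ys' i)" by (rule dual_anti)
        thus ?thesis using valid i False unfolding defs by (auto simp: ys'_def)
      qed
    qed
    have fin': "face_chain K ys' (Suc m) = min_face K (H \<inter> K)"
    proof -
      have "\<forall>X\<in>face_chain K ys (Suc m). minner W X = 0"
      proof
        fix X assume X: "X \<in> face_chain K ys (Suc m)"
        hence Xc: "X \<in> carrier_mat n n" using chain_sub KC by blast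
        have "minner W X = (\<Sum>i<Suc m. d i * minner (ys i) X)" using d Xc by auto
        also have "\<dots> = 0" using chain_orth[OF _ X] by auto
        finally show "minner W X = 0" .
      qed
      hence "face_chain K ys' (Suc m) = face_chain K ys (Suc m)" using c3[of "Suc m"] by auto
      thus ?thesis using fin unfolding defs by simp
    qed
    have ys'strict: "\<forall>p<Suc m. \<exists>X\<in>face_chain K ys' p. minner (ys' p) X \<noteq> 0"
      using minimal_strict[OF valid' fin'] minl unfolding defs by auto
    define vs where "vs = (\<lambda>i. if i = 0 then ys 0 else if i = 1 then W else ys (i - 1))"
    have c4: "1 \<le> i \<Longrightarrow> face_chain K vs (Suc i) = face_chain K ys' i" for i
    proof (induction i rule: dec_induct)
      case base
      have "face_chain K vs 1 = F1" unfolding F1_def vs_def by simp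
      thus ?case using c1 by (simp add: vs_def)
    next
      case (step i) thus ?case by (auto simp: vs_def ys'_def)
    qed
    have vsstrict: "\<forall>p<Suc (Suc m). \<exists>X\<in>face_chain K vs p. minner (vs p) X \<noteq> 0"
    proof (intro allI impI)
      fix p assume p: "p < Suc (Suc m)"
      show "\<exists>X\<in>face_chain K vs p. minner (vs p) X \<noteq> 0"
      proof (cases p)
        case 0
        have "\<exists>X\<in>face_chain K ys 0. minner (ys 0) X \<noteq> 0" using ysstrict by blast
        thus ?thesis using 0 by (simp add: vs_def)
      next
        case (Suc q)
        show ?thesis
        proof (cases q)
          case 0
          have "face_chain K vs 1 = F1" unfolding F1_def vs_def by simp
          thus ?thesis using X1 Suc 0 by (auto simp: vs_def)
        next
          case (Suc q')
          have "face_chain K vs p = face_chain K ys' q" using c4[of q] \<open>p = Suc q\<close> Suc by simp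
          moreover have "vs p = ys' q" using \<open>p = Suc q\<close> Suc by (simp add: vs_def ys'_def)
          ultimately show ?thesis using ys'strict p \<open>p = Suc q\<close> by auto
        qed
      qed
    qed
    have "\<forall>i<Suc (Suc m). vs i \<in> orth n (HD_space n m A B)"
      using ysorth Worth unfolding vs_def H_def by (auto simp: less_Suc_eq)
    from dep_lemma[OF A_sym Bs this] obtain c where
      c: "\<exists>i<Suc (Suc m). c i \<noteq> 0" "\<forall>X\<in>carrier_mat n n. (\<Sum>i<Suc (Suc m). c i * minner (vs i) X) = 0"
      by auto
    have "\<forall>i<Suc (Suc m). c i = 0" using strict_indep[OF vsstrict] c(2) KC by blast
    thus False using c(1) by auto
  qed
  define vs3 where "vs3 = (\<lambda>i. ys (Suc i))"
  have c5: "face_chain F1 vs3 i = face_chain K ys (Suc i)" for i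
    by (induction i) (auto simp: F1_def vs3_def)
  have strict3: "\<forall>i<m. \<exists>X\<in>face_chain F1 vs3 i. minner (vs3 i) X \<noteq> 0"
  proof (intro allI impI)
    fix i assume "i < m"
    hence "Suc i < Suc m" by simp
    hence "\<exists>X\<in>face_chain K ys (Suc i). minner (ys (Suc i)) X \<noteq> 0" using ysstrict by blast
    thus "\<exists>X\<in>face_chain F1 vs3 i. minner (vs3 i) X \<noteq> 0" unfolding c5 unfolding vs3_def .
  qed
  have F1K: "F1 \<subseteq> K" unfolding F1_def using chain_sub by blast
  have rel3: "\<forall>X\<in>F1. (\<Sum>i<m. d (Suc i) * minner (vs3 i) X) = 0"
  proof
    fix X assume X: "X \<in> F1"
    have Xc: "X \<in> carrier_mat n n" using X F1K KC by blast
    have y0X: "minner (ys 0) X = 0" using X unfolding F1_def by simp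
    have "0 = minner W X" using Wvan X by simp
    also have "\<dots> = (\<Sum>i<Suc m. d i * minner (ys i) X)" using d Xc by blast
    also have "\<dots> = d 0 * minner (ys 0) X + (\<Sum>i<m. d (Suc i) * minner (vs3 i) X)"
      unfolding vs3_def by (rule sum.lessThan_Suc_shift)
    finally show "(\<Sum>i<m. d (Suc i) * minner (vs3 i) X) = 0" using y0X by simp
  qed
  have d0: "\<forall>i<m. d (Suc i) = 0" using strict_indep[OF strict3 rel3] by simp
  show ?thesis
  proof (intro exI ballI)
    fix X :: "real mat" assume Xc: "X \<in> carrier_mat n n"
    have "minner W X = (\<Sum>i<Suc m. d i * minner (ys i) X)" using d Xc by blast
    also have "\<dots> = d 0 * minner (ys 0) X + (\<Sum>i<m. d (Suc i) * minner (ys (Suc i)) X)"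
      by (rule sum.lessThan_Suc_shift)
    finally have "minner W X = d 0 * minner (ys 0) X + (\<Sum>i<m. d (Suc i) * minner (ys (Suc i)) X)" .
    thus "minner W X = d 0 * minner (ys 0) X" using d0 by simp
  qed
qed

lemma hb:
  fixes p :: "(nat \<Rightarrow> real) \<Rightarrow> real"
  assumes sub: "\<And>u v. p (\<lambda>i. u i + v i) \<le> p u + p v"
     and hom: "\<And>u r. r > 0 \<Longrightarrow> p (\<lambda>i. r * u i) = r * p u"
  shows "\<exists>w. \<forall>u. (\<forall>i\<ge>N. u i = 0) \<longrightarrow> (\<Sum>i<N. w i * u i) \<le> p u"
proof (induction N)
  case 0
  have "p (\<lambda>i. 0) = 2 * p (\<lambda>i. 0)" using hom[of 2 "\<lambda>i. 0"] by simp
  hence p0: "p (\<lambda>i. 0) = 0" by simp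
  show ?case
  proof (intro exI allI impI)
    fix u :: "nat \<Rightarrow> real" assume "\<forall>i\<ge>0. u i = 0"
    hence "u = (\<lambda>i. 0)" by auto
    thus "(\<Sum>i<0. (\<lambda>_. 0) i * u i) \<le> p u" using p0 by simp
  qed
next
  case (Suc N)
  then obtain w where w: "\<And>u. (\<forall>i\<ge>N. u i = 0) \<Longrightarrow> (\<Sum>i<N. w i * u i) \<le> p u" by blast
  define l where "l = (\<lambda>u. \<Sum>i<N. w i * u i)"
  define e where "e = (\<lambda>i::nat. if i = N then 1 else (0::real))"
  define L where "L = {l u - p (\<lambda>i. u i - e i) | u. \<forall>i\<ge>N. u i = 0}"
  define U where "U = {p (\<lambda>i. v i + e i) - l v | v. \<forall>i\<ge>N. v i = 0}"
  have LU: "x \<le> y" if xL: "x \<in> L" and yU: "y \<in> U" for x y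
  proof -
    obtain u where u: "x = l u - p (\<lambda>i. u i - e i)" "\<forall>i\<ge>N. u i = 0" using xL unfolding L_def by blast
    obtain v where v: "y = p (\<lambda>i. v i + e i) - l v" "\<forall>i\<ge>N. v i = 0" using yU unfolding U_def by blast
    have "l u + l v = l (\<lambda>i. u i + v i)" unfolding l_def by (simp add: sum.distrib algebra_simps)
    also have "\<dots> \<le> p (\<lambda>i. u i + v i)" unfolding l_def using u(2) v(2) by (intro w) auto
    also have "(\<lambda>i. u i + v i) = (\<lambda>i. (u i - e i) + (v i + e i))" by auto
    also have "p \<dots> \<le> p (\<lambda>i. u i - e i) + p (\<lambda>i. v i + e i)" by (rule sub)
    finally show ?thesis using u(1) v(1) by simp
  qed
  have L0: "l (\<lambda>i. 0) - p (\<lambda>i. (\<lambda>i. 0) i - e i) \<in> L" unfolding L_def by blast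
  have U0: "p (\<lambda>i. (\<lambda>i. 0) i + e i) - l (\<lambda>i. 0) \<in> U" unfolding U_def by (intro CollectI exI[of _ "\<lambda>i. 0"]) auto
  have Lne: "L \<noteq> {}" using L0 by auto
  have Lbdd: "bdd_above L" using LU[OF _ U0] by (intro bdd_aboveI) auto
  define wN where "wN = Sup L"
  have upL: "x \<le> wN" if "x \<in> L" for x unfolding wN_def using cSup_upper[OF that Lbdd] .
  have lowU: "wN \<le> y" if "y \<in> U" for y unfolding wN_def using cSup_least[OF Lne] LU that by blast
  show ?case
  proof (intro exI allI impI)
    fix u :: "nat \<Rightarrow> real" assume us: "\<forall>i\<ge>Suc N. u i = 0"
    define u0 where "u0 = (\<lambda>i. if i < N then u i else 0)"
    define s where "s = u N"
    have u0s: "\<forall>i\<ge>N. u0 i = 0" unfolding u0_def by auto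
    have decomp: "u = (\<lambda>i. u0 i + s * e i)" using us unfolding u0_def s_def e_def
      by (auto simp: fun_eq_iff)
    have sumeq: "(\<Sum>i<Suc N. (w(N := wN)) i * u i) = l u0 + wN * s"
      unfolding l_def u0_def s_def by (auto intro!: sum.cong)
    show "(\<Sum>i<Suc N. (w(N := wN)) i * u i) \<le> p u"
    proof (cases s "0::real" rule: linorder_cases)
      case equal
      hence "u = u0" using decomp by simp
      thus ?thesis using sumeq equal w[OF u0s] unfolding l_def by auto
    next
      case greater
      define v where "v = (\<lambda>i. u0 i / s)"
      have vs: "\<forall>i\<ge>N. v i = 0" using u0s unfolding v_def by auto
      have "wN \<le> p (\<lambda>i. v i + e i) - l v" using lowU vs unfolding U_def by blast
      hence "s * wN \<le> s * p (\<lambda>i. v i + e i) - s * l v" using greater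
        by (metis mult_le_cancel_left_pos right_diff_distrib)
      also have "s * p (\<lambda>i. v i + e i) = p (\<lambda>i. s * (v i + e i))" using hom greater by simp
      also have "(\<lambda>i. s * (v i + e i)) = u" using decomp greater unfolding v_def by (auto simp: field_simps)
      also have "s * l v = l u0" unfolding l_def v_def using greater
        by (simp add: sum_distrib_left field_simps)
      finally show ?thesis using sumeq by (simp add: mult.commute)
    next
      case less
      define r where "r = - s"
      have rp: "r > 0" using less unfolding r_def by simp
      define v where "v = (\<lambda>i. u0 i / r)"
      have vs: "\<forall>i\<ge>N. v i = 0" using u0s unfolding v_def by auto
      have "l v - p (\<lambda>i. v i - e i) \<le> wN" using upL vs unfolding L_def by blast
      hence "r * l v - r * p (\<lambda>i. v i - e i) \<le> r * wN" using rp
        by (metis mult_le_cancel_left_pos right_diff_distrib)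
      also have "r * p (\<lambda>i. v i - e i) = p (\<lambda>i. r * (v i - e i))" using hom rp by simp
      also have "(\<lambda>i. r * (v i - e i)) = u" using decomp rp unfolding v_def r_def by (auto simp: field_simps)
      also have "r * l v = l u0" unfolding l_def v_def using rp
        by (simp add: sum_distrib_left field_simps)
      finally show ?thesis using sumeq unfolding r_def by (simp add: algebra_simps)
    qed
  qed
qed


lemma sep:
  fixes C :: "(nat \<Rightarrow> real) set"
  assumes sub: "\<forall>u\<in>C. \<forall>i\<ge>N. u i = 0"
    and add: "\<forall>u\<in>C. \<forall>v\<in>C. (\<lambda>i. u i + v i) \<in> C"
    and scal: "\<forall>u\<in>C. \<forall>r>0. (\<lambda>i. r * u i) \<in> C"
    and ne: "C \<noteq> {}"
    and notall: "\<exists>v. (\<forall>i\<ge>N. v i = 0) \<and> v \<notin> C"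
  shows "\<exists>a. (\<exists>i<N. a i \<noteq> 0) \<and> (\<forall>u\<in>C. (\<Sum>i<N. a i * u i) \<ge> 0)"
  using assms
proof (induction N arbitrary: C)
  case 0
  have z: "\<forall>u\<in>C. u = (\<lambda>i. 0)" using "0.prems"(1) by (auto simp: fun_eq_iff)
  obtain v where v: "\<forall>i\<ge>0. v i = 0" "v \<notin> C" using "0.prems"(5) by blast
  have "v = (\<lambda>i. 0)" using v(1) by (auto simp: fun_eq_iff)
  thus ?case using z v(2) "0.prems"(4) by auto
next
  case (Suc N)
  note sub = Suc.prems(1) and add = Suc.prems(2) and scal = Suc.prems(3) and ne = Suc.prems(4)
    and notall = Suc.prems(5)
  define pr where "pr = (\<lambda>u::nat\<Rightarrow>real. \<lambda>i. if i < N then u i else 0)"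
  show ?case
  proof (cases "\<exists>v. (\<forall>i\<ge>N. v i = 0) \<and> v \<notin> pr ` C")
    case True
    have "\<forall>u\<in>pr ` C. \<forall>i\<ge>N. u i = 0" unfolding pr_def by auto
    moreover have "\<forall>u\<in>pr ` C. \<forall>v\<in>pr ` C. (\<lambda>i. u i + v i) \<in> pr ` C"
    proof (intro ballI)
      fix u v assume "u \<in> pr ` C" "v \<in> pr ` C"
      then obtain u' v' where "u' \<in> C" "v' \<in> C" "u = pr u'" "v = pr v'" by auto
      hence "(\<lambda>i. u i + v i) = pr (\<lambda>i. u' i + v' i)" unfolding pr_def by auto
      thus "(\<lambda>i. u i + v i) \<in> pr ` C" using add \<open>u' \<in> C\<close> \<open>v' \<in> C\<close> by auto
    qed
    moreover have "\<forall>u\<in>pr ` C. \<forall>r>0. (\<lambda>i. r * u i) \<in> pr ` C"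
    proof (intro ballI allI impI)
      fix u r assume "u \<in> pr ` C" "(r::real) > 0"
      then obtain u' where "u' \<in> C" "u = pr u'" by auto
      hence "(\<lambda>i. r * u i) = pr (\<lambda>i. r * u' i)" unfolding pr_def by auto
      thus "(\<lambda>i. r * u i) \<in> pr ` C" using scal \<open>u' \<in> C\<close> \<open>r > 0\<close> by auto
    qed
    moreover have "pr ` C \<noteq> {}" using ne by auto
    ultimately have "\<exists>a. (\<exists>i<N. a i \<noteq> 0) \<and> (\<forall>u\<in>pr ` C. (\<Sum>i<N. a i * u i) \<ge> 0)"
      using True by (intro Suc.IH) auto
    then obtain a where a: "\<exists>i<N. a i \<noteq> 0" "\<forall>u\<in>pr ` C. (\<Sum>i<N. a i * u i) \<ge> 0"
      by blast
    show ?thesis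
    proof (rule exI[of _ "\<lambda>i. if i < N then a i else 0"], intro conjI ballI)
      show "\<exists>i<Suc N. (\<lambda>i. if i < N then a i else 0) i \<noteq> 0" using a(1) by auto
      fix u assume "u \<in> C"
      hence "(\<Sum>i<N. a i * pr u i) \<ge> 0" using a(2) by auto
      thus "(\<Sum>i<Suc N. (\<lambda>i. if i < N then a i else 0) i * u i) \<ge> 0" unfolding pr_def by simp
    qed
  next
    case False
    hence surj: "\<forall>v. (\<forall>i\<ge>N. v i = 0) \<longrightarrow> v \<in> pr ` C" by blast
    define e where "e = (\<lambda>i::nat. if i = N then 1 else (0::real))"
    define ins where "ins = (\<lambda>(u::nat\<Rightarrow>real) (t::real). \<lambda>i. if i < N then u i else if i = N then t else 0)"
    have insC: "\<exists>t. ins u t \<in> C" for u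
    proof -
      have "pr u \<in> pr ` C" using surj unfolding pr_def by auto
      then obtain c where c: "c \<in> C" "pr u = pr c" by auto
      have "ins u (c N) = c" using c sub unfolding ins_def pr_def by (auto simp: fun_eq_iff) (metis not_less_eq_eq)
      thus ?thesis using c(1) by (intro exI[of _ "c N"]) simp
    qed
    obtain \<sigma> :: real where sig: "\<sigma> = 1 \<or> \<sigma> = -1" "ins (\<lambda>i. 0) (- \<sigma>) \<notin> C"
    proof (cases "ins (\<lambda>i. 0) (- 1) \<in> C \<and> ins (\<lambda>i. 0) 1 \<in> C")
      case True
      have "v \<in> C" if v: "\<forall>i\<ge>Suc N. v i = 0" for v
      proof -
        obtain t where t: "ins v t \<in> C" using insC by blast
        define d where "d = v N - t"
        have vv: "v = (\<lambda>i. ins v t i + d * e i)" using v unfolding ins_def d_def e_def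
          by (auto simp: fun_eq_iff)
        show ?thesis
        proof (cases d "0::real" rule: linorder_cases)
          case less
          have "(\<lambda>i. (-d) * ins (\<lambda>i. 0) (-1) i) \<in> C" using scal True less by (intro bspec[OF scal, rule_format]) auto
          moreover have "(\<lambda>i. (-d) * ins (\<lambda>i. 0) (-1) i) = (\<lambda>i. d * e i)" unfolding ins_def e_def by auto
          ultimately have "(\<lambda>i. d * e i) \<in> C" by simp
          from bspec[OF bspec[OF add t] this] have "(\<lambda>i. ins v t i + d * e i) \<in> C" by simp
          thus ?thesis using vv by simp
        next
          case equal thus ?thesis using vv t by simp
        next
          case greater
          have "(\<lambda>i. d * ins (\<lambda>i. 0) 1 i) \<in> C" using scal True greater by (intro bspec[OF scal, rule_format]) auto
          moreover have "(\<lambda>i. d * ins (\<lambda>i. 0) 1 i) = (\<lambda>i. d * e i)" unfolding ins_def e_def by auto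
          ultimately have "(\<lambda>i. d * e i) \<in> C" by simp
          from bspec[OF bspec[OF add t] this] have "(\<lambda>i. ins v t i + d * e i) \<in> C" by simp
          thus ?thesis using vv by simp
        qed
      qed
      thus ?thesis using notall by blast
    next
      case False
      thus ?thesis using that[of 1] that[of "-1"] by auto
    qed
    have sig2: "\<sigma> * \<sigma> = 1" using sig(1) by auto
    define T where "T = (\<lambda>u. {t. ins u (\<sigma> * t) \<in> C})"
    define g where "g = (\<lambda>u. Inf (T u))"
    have Tne: "T u \<noteq> {}" for u
    proof -
      obtain t where "ins u t \<in> C" using insC by blast
      hence "\<sigma> * t \<in> T u" unfolding T_def using sig2 by (simp add: mult.assoc[symmetric])
      thus ?thesis by auto
    qed
    have insadd: "(\<lambda>i. ins u t i + ins v s i) = ins (\<lambda>i. u i + v i) (t + s)" for u v t s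
      unfolding ins_def by auto
    have insscal: "(\<lambda>i. r * ins u t i) = ins (\<lambda>i. r * u i) (r * t)" for u t r
      unfolding ins_def by auto
    have Tadd: "t \<in> T u \<Longrightarrow> s \<in> T v \<Longrightarrow> t + s \<in> T (\<lambda>i. u i + v i)" for t s u v
    proof -
      assume a: "t \<in> T u" "s \<in> T v"
      have "(\<lambda>i. ins u (\<sigma> * t) i + ins v (\<sigma> * s) i) \<in> C" using add a unfolding T_def by blast
      hence "ins (\<lambda>i. u i + v i) (\<sigma> * t + \<sigma> * s) \<in> C" by (simp only: insadd)
      thus ?thesis unfolding T_def by (simp add: distrib_left)
    qed
    have Tscal: "t \<in> T u \<Longrightarrow> r > 0 \<Longrightarrow> r * t \<in> T (\<lambda>i. r * u i)" for t u r
    proof -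
      assume a: "t \<in> T u" "r > 0"
      have "(\<lambda>i. r * ins u (\<sigma> * t) i) \<in> C" using scal a unfolding T_def by blast
      hence "ins (\<lambda>i. r * u i) (r * (\<sigma> * t)) \<in> C" by (simp only: insscal)
      thus ?thesis unfolding T_def by (simp add: mult.left_commute)
    qed
    have T0: "t \<in> T (\<lambda>i. 0) \<Longrightarrow> t \<ge> 0" for t
    proof (rule ccontr)
      assume t: "t \<in> T (\<lambda>i. 0)" "\<not> t \<ge> 0"
      have "(1 / (-t)) * t \<in> T (\<lambda>i. (1/(-t)) * 0)" using Tscal[OF t(1), of "1/(-t)"] t(2) by simp
      moreover have "(1 / (-t)) * t = -1" using t(2) by simp
      ultimately have "- 1 \<in> T (\<lambda>i. 0)" by simp
      hence "ins (\<lambda>i. 0) (- \<sigma>) \<in> C" unfolding T_def by simp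
      thus False using sig(2) by simp
    qed
    have Tbdd: "bdd_below (T u)" for u
    proof -
      obtain s where s: "s \<in> T (\<lambda>i. - u i)" using Tne by blast
      have "t \<ge> - s" if "t \<in> T u" for t
      proof -
        have "t + s \<in> T (\<lambda>i. u i + - u i)" by (rule Tadd[OF that s])
        hence "t + s \<in> T (\<lambda>i. 0)" by simp
        thus ?thesis using T0 by fastforce
      qed
      thus ?thesis by (intro bdd_belowI) auto
    qed
    have glow: "t \<in> T u \<Longrightarrow> g u \<le> t" for t u unfolding g_def by (rule cInf_lower[OF _ Tbdd])
    have ggreat: "(\<And>t. t \<in> T u \<Longrightarrow> x \<le> t) \<Longrightarrow> x \<le> g u" for x u
      unfolding g_def by (rule cInf_greatest[OF Tne])
    have gsub: "g (\<lambda>i. u i + v i) \<le> g u + g v" for u v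
    proof -
      have "g (\<lambda>i. u i + v i) - s \<le> g u" if s: "s \<in> T v" for s
      proof (rule ggreat)
        fix t assume "t \<in> T u"
        from glow[OF Tadd[OF this s]] show "g (\<lambda>i. u i + v i) - s \<le> t" by simp
      qed
      hence "g (\<lambda>i. u i + v i) - g u \<le> g v"
        by (intro ggreat) (metis add.commute diff_le_eq)
      thus ?thesis by simp
    qed
    have ghom: "g (\<lambda>i. r * u i) = r * g u" if r: "r > 0" for u r
    proof (rule antisym)
      have "g (\<lambda>i. r * u i) / r \<le> t" if "t \<in> T u" for t
        using glow[OF Tscal[OF that r]] r by (simp add: field_simps)
      hence "g (\<lambda>i. r * u i) / r \<le> g u" using ggreat by blast
      thus "g (\<lambda>i. r * u i) \<le> r * g u" using r by (simp add: field_simps)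
    next
      have "r * g u \<le> t" if t: "t \<in> T (\<lambda>i. r * u i)" for t
      proof -
        have "(1/r) * t \<in> T (\<lambda>i. (1/r) * (r * u i))" using Tscal[OF t, of "1/r"] r by simp
        moreover have "(\<lambda>i. (1/r) * (r * u i)) = u" using r by auto
        ultimately have "t / r \<in> T u" by simp
        hence "g u \<le> t / r" by (rule glow)
        thus ?thesis using r by (simp add: field_simps)
      qed
      thus "r * g u \<le> g (\<lambda>i. r * u i)" using ggreat by blast
    qed
    obtain w where w: "\<forall>u. (\<forall>i\<ge>N. u i = 0) \<longrightarrow> (\<Sum>i<N. w i * u i) \<le> g u"
      using hb[of g N] gsub ghom by blast
    show ?thesis
    proof (rule exI[of _ "\<lambda>i. if i < N then - w i else if i = N then \<sigma> else 0"], intro conjI ballI)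
      show "\<exists>i<Suc N. (\<lambda>i. if i < N then - w i else if i = N then \<sigma> else 0) i \<noteq> 0"
        using sig(1) by (intro exI[of _ N]) auto
      fix c assume c: "c \<in> C"
      have "ins (pr c) (\<sigma> * (\<sigma> * c N)) = c" using c sub sig2 unfolding ins_def pr_def
        by (auto simp: fun_eq_iff mult.assoc[symmetric])
      hence "\<sigma> * c N \<in> T (pr c)" unfolding T_def using c by simp
      hence "g (pr c) \<le> \<sigma> * c N" by (rule glow)
      moreover have "(\<Sum>i<N. w i * pr c i) \<le> g (pr c)" using w[rule_format, of "pr c"] unfolding pr_def by auto
      ultimately have "(\<Sum>i<N. w i * c i) \<le> \<sigma> * c N" unfolding pr_def by simp
      thus "(\<Sum>i<Suc N. (\<lambda>i. if i < N then - w i else if i = N then \<sigma> else 0) i * c i) \<ge> 0"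
        by (simp add: sum_negf)
    qed
  qed
qed


lemma ip_add_right: "Y \<in> carrier_mat n n \<Longrightarrow> Z \<in> carrier_mat n n \<Longrightarrow> ip n X (Y + Z) = ip n X Y + ip n X Z"
  by (simp add: ip_comm[of n X] ip_add_left)

lemma ip_smult_right: "Y \<in> carrier_mat n n \<Longrightarrow> ip n X (c \<cdot>\<^sub>m Y) = c * ip n X Y"
  by (simp add: ip_comm[of n X] ip_smult_left)

lemma Q_add: "X \<in> carrier_mat n n \<Longrightarrow> Y \<in> carrier_mat n n \<Longrightarrow> Q n (X + Y) v = Q n X v + Q n Y v"
  unfolding Q_def by (simp add: algebra_simps sum.distrib)

lemma Q_smult: "X \<in> carrier_mat n n \<Longrightarrow> Q n (c \<cdot>\<^sub>m X) v = c * Q n X v"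
  unfolding Q_def by (simp add: algebra_simps sum_distrib_left)

lemma Q_one: "Q n (1\<^sub>m n) v = (\<Sum>a<n. v a * v a)"
  unfolding Q_def by (simp add: if_distrib if_distribR cong: if_cong)

lemma pd_Q: fixes X :: "real mat" shows "pos_def n X \<longleftrightarrow> X \<in> sym_mats n \<and> (\<forall>v. (\<exists>i<n. v i \<noteq> 0) \<longrightarrow> Q n X v > 0)"
proof
  assume p: "pos_def n X"
  have Xc: "X \<in> carrier_mat n n" using p sym_carrier unfolding pos_def_def by auto
  show "X \<in> sym_mats n \<and> (\<forall>v. (\<exists>i<n. v i \<noteq> 0) \<longrightarrow> Q n X v > 0)"
  proof (intro conjI allI impI)
    show "X \<in> sym_mats n" using p unfolding pos_def_def by auto
    fix v :: "nat \<Rightarrow> real" assume "\<exists>i<n. v i \<noteq> 0"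
    hence "vec n v \<noteq> 0\<^sub>v n" by (metis index_vec index_zero_vec(1))
    hence "vec n v \<bullet> (X *\<^sub>v vec n v) > 0" using p unfolding pos_def_def by auto
    thus "Q n X v > 0" unfolding quad_sum[OF Xc vec_carrier] Q_def by simp
  qed
next
  assume a: "X \<in> sym_mats n \<and> (\<forall>v. (\<exists>i<n. v i \<noteq> 0) \<longrightarrow> Q n X v > 0)"
  have Xc: "X \<in> carrier_mat n n" using a sym_carrier by auto
  show "pos_def n X" unfolding pos_def_def
  proof (intro conjI ballI impI)
    show "X \<in> sym_mats n" using a by auto
    fix v :: "real vec" assume v: "v \<in> carrier_vec n" "v \<noteq> 0\<^sub>v n"
    have "\<exists>i<n. v $ i \<noteq> 0" using v by (metis carrier_vecD eq_vecI index_zero_vec(1) index_zero_vec(2))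
    hence "Q n X (\<lambda>i. v $ i) > 0" using a by auto
    thus "v \<bullet> (X *\<^sub>v v) > 0" unfolding quad_sum[OF Xc v(1)] Q_def by simp
  qed
qed

lemma pd_psd: "pos_def n X \<Longrightarrow> X \<in> psd_cone n"
proof -
  assume p: "pos_def n X"
  have s: "X \<in> sym_mats n" using p pd_Q by auto
  show ?thesis
  proof (rule Q_psd[OF s])
    fix v
    show "Q n X v \<ge> 0"
    proof (cases "\<exists>i<n. v i \<noteq> 0")
      case True thus ?thesis using p pd_Q by (auto intro: less_imp_le)
    next
      case False thus ?thesis unfolding Q_def by auto
    qed
  qed
qed

lemma one_sym: "1\<^sub>m n \<in> sym_mats n" unfolding sym_mats_def by auto

lemma sym_smult: "X \<in> sym_mats n \<Longrightarrow> c \<cdot>\<^sub>m X \<in> sym_mats n"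
  unfolding sym_mats_def by (auto intro!: eq_matI) (metis carrier_matD index_transpose_mat(1))

lemma pd_one: "pos_def n (1\<^sub>m n)"
proof -
  have "(\<Sum>a<n. v a * v a) > 0" if ex: "\<exists>i<n. v i \<noteq> 0" for v :: "nat \<Rightarrow> real"
  proof -
    obtain i where i: "i < n" "v i \<noteq> 0" using ex by blast
    show ?thesis by (rule sum_pos2[of _ i]) (use i in \<open>auto simp: zero_less_mult_iff linorder_neq_iff\<close>)
  qed
  thus ?thesis unfolding pd_Q Q_one using one_sym by auto
qed


lemma mlincomb_zero: "(\<forall>i<m. x i = 0) \<Longrightarrow> mlincomb n m x A = 0\<^sub>m n n"
  unfolding mlincomb_def by (intro eq_matI) auto

lemma coeffs:
  assumes A_sym: "\<forall>i<m. A i \<in> sym_mats n" and B_def: "B = block_id n r" and r_lt: "r < n"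
    and lin_indep: "lin_indep_data n m A B"
    and CORE: "\<forall>W\<in>dual_cone n (psd_cone n) \<inter> orth n (HD_space n m A B).
                \<exists>t. \<forall>X\<in>carrier_mat n n. minner W X = t * minner y0 X"
    and Wd: "mlincomb n m a A + b \<cdot>\<^sub>m B \<in> dual_cone n (psd_cone n)"
  shows "\<forall>i<m. a i = 0"
proof -
  have Bs: "B \<in> sym_mats n" using B_def block_id_sym by simp
  have Bc: "B \<in> carrier_mat n n" using Bs sym_carrier by blast
  have Acarr: "\<forall>i<m. A i \<in> carrier_mat n n" using A_sym sym_carrier by blast
  have rpos: "r > 0"
  proof (rule ccontr)
    assume "\<not> r > 0" hence r0: "r = 0" by simp
    have "B = 0\<^sub>m n n" unfolding B_def r0 block_id_def by (intro eq_matI) auto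
    hence "mlincomb n m (\<lambda>_. 0) A + 1 \<cdot>\<^sub>m B = 0\<^sub>m n n" using mlincomb_zero[of m "\<lambda>_. 0"] by simp
    thus False using lin_indep unfolding lin_indep_data_def by (metis one_neq_zero)
  qed
  have ipB: "ip n B Y = (\<Sum>a<r. Y $$ (a,a))" for Y using ip_block r_lt B_def by simp
  have Bdual: "B \<in> dual_cone n (psd_cone n)"
    unfolding dual_cone_def using Bs
    by (auto simp: sym_ip_minner[OF Bs] psd_carrier ipB intro!: sum_nonneg psd_diag) (use r_lt in auto)
  have Borth: "B \<in> orth n (HD_space n m A B)" unfolding orth_def HD_space_def using Bs by auto
  obtain s where s: "\<forall>X\<in>carrier_mat n n. minner B X = s * minner y0 X" using CORE Bdual Borth by blast
  have "minner B B = real r"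
    unfolding sym_ip_minner[OF Bs Bc] ipB using r_lt by (simp add: B_def block_id_def)
  hence s0: "s \<noteq> 0" using s Bc rpos by auto
  define W where "W = mlincomb n m a A + b \<cdot>\<^sub>m B"
  have Wc: "W \<in> carrier_mat n n" unfolding W_def using Bc by simp
  have Ws: "W \<in> sym_mats n" using Wd unfolding W_def dual_cone_def by auto
  have ipW: "ip n W Y = (\<Sum>i<m. a i * ip n (A i) Y) + b * ip n B Y" for Y
    unfolding W_def by (simp add: ip_add_left Bc ip_smult_left ip_mlincomb_left)
  have Worth: "W \<in> orth n (HD_space n m A B)"
  proof -
    have "minner W Y = 0" if Y: "Y \<in> HD_space n m A B" for Y
    proof -
      have Yc: "Y \<in> carrier_mat n n" using Y unfolding HD_space_def using sym_carrier by auto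
      have "minner W Y = (\<Sum>i<m. a i * minner (A i) Y) + b * minner B Y"
      proof -
        have "(\<Sum>i<m. a i * minner (A i) Y) = (\<Sum>i<m. a i * ip n (A i) Y)"
          using Acarr Yc by (intro sum.cong refl) (simp add: minner_ip)
        thus ?thesis using ipW Yc Wc Bc by (simp add: minner_ip)
      qed
      also have "\<dots> = 0" using Y unfolding HD_space_def by simp
      finally show ?thesis .
    qed
    thus ?thesis unfolding orth_def using Ws by auto
  qed
  obtain t where t: "\<forall>X\<in>carrier_mat n n. minner W X = t * minner y0 X"
    using CORE Wd Worth unfolding W_def by blast
  define D where "D = W - (t/s) \<cdot>\<^sub>m B"
  have Dc: "D \<in> carrier_mat n n" unfolding D_def using Wc Bc by (metis minus_carrier_mat smult_carrier_mat)
  have Ds: "D \<in> sym_mats n" unfolding D_def using Ws Bs sym_smult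
    unfolding sym_mats_def by (auto simp: transpose_minus)
  have "ip n D D = ip n W D - (t/s) * ip n B D"
    unfolding D_def using Wc Bc by (simp add: ip_minus_left ip_smult_left)
  also have "\<dots> = minner W D - (t/s) * minner B D" using Wc Bc Dc by (simp add: minner_ip)
  also have "\<dots> = 0" using t s Dc s0 by simp
  finally have "D = 0\<^sub>m n n" using ip_self_zero[OF Ds] by simp
  hence D0: "mlincomb n m a A + b \<cdot>\<^sub>m B - (t/s) \<cdot>\<^sub>m B = 0\<^sub>m n n" unfolding D_def W_def .
  have "mlincomb n m a A + (b - t/s) \<cdot>\<^sub>m B = 0\<^sub>m n n"
  proof (intro eq_matI)
    fix i j assume ij: "i < dim_row (0\<^sub>m n n :: real mat)" "j < dim_col (0\<^sub>m n n :: real mat)"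
    have "(mlincomb n m a A + b \<cdot>\<^sub>m B - (t/s) \<cdot>\<^sub>m B) $$ (i,j) = 0" using D0 ij by simp
    thus "(mlincomb n m a A + (b - t/s) \<cdot>\<^sub>m B) $$ (i,j) = 0\<^sub>m n n $$ (i,j)"
      using ij Bc by (simp add: algebra_simps)
  qed (use Bc in auto)
  thus ?thesis using lin_indep unfolding lin_indep_data_def by blast
qed


lemma pd_add: "pos_def n X \<Longrightarrow> pos_def n Y \<Longrightarrow> pos_def n (X + Y)"
  unfolding pd_Q by (auto simp: sym_add Q_add sym_carrier add_pos_pos)

lemma pd_smult: "pos_def n X \<Longrightarrow> r > 0 \<Longrightarrow> pos_def n (r \<cdot>\<^sub>m X)"
  unfolding pd_Q by (auto simp: sym_smult Q_smult sym_carrier)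

lemma psd_eps_pd: "X \<in> psd_cone n \<Longrightarrow> e > 0 \<Longrightarrow> pos_def n (X + e \<cdot>\<^sub>m 1\<^sub>m n)"
proof -
  assume X: "X \<in> psd_cone n" and e: "e > 0"
  have Xc: "X \<in> carrier_mat n n" using X psd_carrier by blast
  have "Q n (X + e \<cdot>\<^sub>m 1\<^sub>m n) v > 0" if ex: "\<exists>i<n. v i \<noteq> 0" for v
  proof -
    have "(\<Sum>a<n. v a * v a) > 0" using pd_one ex unfolding pd_Q Q_one by auto
    moreover have "Q n (X + e \<cdot>\<^sub>m 1\<^sub>m n) v = Q n X v + e * (\<Sum>a<n. v a * v a)"
      using Xc by (simp add: Q_add Q_smult Q_one)
    ultimately show ?thesis using psd_Q[OF X, of v] e by (simp add: add_nonneg_pos)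
  qed
  moreover have "X + e \<cdot>\<^sub>m 1\<^sub>m n \<in> sym_mats n" using X psd_sym sym_add sym_smult one_sym by blast
  ultimately show ?thesis unfolding pd_Q by auto
qed

lemma r_pos:
  assumes B_def: "B = block_id n r" and lin_indep: "lin_indep_data n m A B"
  shows "r > 0"
proof (rule ccontr)
  assume "\<not> r > 0" hence r0: "r = 0" by simp
  have "B = 0\<^sub>m n n" unfolding B_def r0 block_id_def by (intro eq_matI) auto
  hence "mlincomb n m (\<lambda>_. 0) A + 1 \<cdot>\<^sub>m B = 0\<^sub>m n n" using mlincomb_zero[of m "\<lambda>_. 0"] by simp
  thus False using lin_indep unfolding lin_indep_data_def by (metis one_neq_zero)
qed

lemma strict_feas:
  assumes A_sym: "\<forall>i<m. A i \<in> sym_mats n" and Bs: "B \<in> sym_mats n"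
    and COEF: "\<forall>a b. mlincomb n m a A + b \<cdot>\<^sub>m B \<in> dual_cone n (psd_cone n) \<longrightarrow> (\<forall>i<m. a i = 0)"
  shows "\<exists>Y. pos_def n Y \<and> (\<forall>i<m. minner (A i) Y = c i * minner B Y)"
proof (rule ccontr)
  assume nex: "\<not> (\<exists>Y. pos_def n Y \<and> (\<forall>i<m. minner (A i) Y = c i * minner B Y))"
  have Bc: "B \<in> carrier_mat n n" using Bs sym_carrier by blast
  have Acarr: "\<forall>i<m. A i \<in> carrier_mat n n" using A_sym sym_carrier by blast
  define phi where "phi = (\<lambda>Y. \<lambda>i. if i < m then ip n (A i) Y - c i * ip n B Y else 0)"
  define C where "C = {u. \<exists>Y. pos_def n Y \<and> u = phi Y}"
  have pdc: "pos_def n Y \<Longrightarrow> Y \<in> carrier_mat n n" for Y using pd_Q sym_carrier by blast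
  have "\<exists>a. (\<exists>i<m. a i \<noteq> 0) \<and> (\<forall>u\<in>C. (\<Sum>i<m. a i * u i) \<ge> 0)"
  proof (rule sep)
    show "\<forall>u\<in>C. \<forall>i\<ge>m. u i = 0" unfolding C_def phi_def by auto
    show "\<forall>u\<in>C. \<forall>v\<in>C. (\<lambda>i. u i + v i) \<in> C"
    proof (intro ballI)
      fix u v assume "u \<in> C" "v \<in> C"
      then obtain Y1 Y2 where Y: "pos_def n Y1" "u = phi Y1" "pos_def n Y2" "v = phi Y2"
        unfolding C_def by auto
      have "(\<lambda>i. u i + v i) = phi (Y1 + Y2)"
        unfolding Y phi_def using pdc[OF Y(1)] pdc[OF Y(3)] by (auto simp: ip_add_right algebra_simps)
      thus "(\<lambda>i. u i + v i) \<in> C" unfolding C_def using pd_add[OF Y(1) Y(3)] by auto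
    qed
    show "\<forall>u\<in>C. \<forall>r>0. (\<lambda>i. r * u i) \<in> C"
    proof (intro ballI allI impI)
      fix u and r :: real assume "u \<in> C" "r > 0"
      then obtain Y where Y: "pos_def n Y" "u = phi Y" unfolding C_def by auto
      have "(\<lambda>i. r * u i) = phi (r \<cdot>\<^sub>m Y)"
        unfolding Y phi_def using pdc[OF Y(1)] by (auto simp: ip_smult_right algebra_simps)
      thus "(\<lambda>i. r * u i) \<in> C" unfolding C_def using pd_smult[OF Y(1) \<open>r > 0\<close>] by auto
    qed
    show "C \<noteq> {}" unfolding C_def using pd_one by auto
    show "\<exists>v. (\<forall>i\<ge>m. v i = 0) \<and> v \<notin> C"
    proof (intro exI conjI)
      show "\<forall>i\<ge>m. (\<lambda>i. 0::real) i = 0" by simp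
      show "(\<lambda>i. 0::real) \<notin> C"
      proof
        assume "(\<lambda>i. 0::real) \<in> C"
        then obtain Y where Y: "pos_def n Y" "(\<lambda>i. 0::real) = phi Y" unfolding C_def by auto
        have "\<forall>i<m. minner (A i) Y = c i * minner B Y"
        proof (intro allI impI)
          fix i assume i: "i < m"
          have "phi Y i = 0" using Y(2) by (metis)
          moreover have "minner (A i) Y = ip n (A i) Y" "minner B Y = ip n B Y"
            using i pdc[OF Y(1)] Acarr Bc by (auto simp: minner_ip)
          ultimately show "minner (A i) Y = c i * minner B Y" using i unfolding phi_def by simp
        qed
        thus False using nex Y(1) by blast
      qed
    qed
  qed
  then obtain a where a: "\<exists>i<m. a i \<noteq> 0" "\<forall>u\<in>C. (\<Sum>i<m. a i * u i) \<ge> 0" by blast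
  define M where "M = mlincomb n m a A + (- (\<Sum>i<m. a i * c i)) \<cdot>\<^sub>m B"
  have Mc: "M \<in> carrier_mat n n" unfolding M_def using Bc by simp
  have Ms: "M \<in> sym_mats n" unfolding M_def using mlincomb_sym[OF A_sym] sym_smult[OF Bs] sym_add by blast
  have ipM: "ip n M Z = (\<Sum>i<m. a i * ip n (A i) Z) - (\<Sum>i<m. a i * c i) * ip n B Z" for Z
    unfolding M_def using Bc by (simp add: ip_add_left ip_smult_left ip_mlincomb_left)
  have pdpos: "ip n M Y \<ge> 0" if Y: "pos_def n Y" for Y
  proof -
    have "phi Y \<in> C" unfolding C_def using Y by auto
    hence "(\<Sum>i<m. a i * phi Y i) \<ge> 0" using a(2) by blast
    moreover have "(\<Sum>i<m. a i * phi Y i) = ip n M Y"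
      unfolding ipM phi_def by (simp add: algebra_simps sum_subtractf sum_distrib_left sum_distrib_right)
    ultimately show ?thesis by simp
  qed
  have "M \<in> dual_cone n (psd_cone n)"
  proof -
    have "minner M X \<ge> 0" if X: "X \<in> psd_cone n" for X
    proof (rule ccontr)
      assume neg: "\<not> minner M X \<ge> 0"
      have Xc: "X \<in> carrier_mat n n" using X psd_carrier by blast
      have lin: "ip n M (X + e \<cdot>\<^sub>m 1\<^sub>m n) = ip n M X + e * ip n M (1\<^sub>m n)" for e
        using Xc by (simp add: ip_add_right ip_smult_right)
      have mX: "ip n M X < 0" using neg Mc Xc by (simp add: minner_ip)
      define e where "e = (if ip n M (1\<^sub>m n) \<le> 0 then 1 else - ip n M X / (2 * ip n M (1\<^sub>m n)))"
      have ep: "e > 0" unfolding e_def using mX by (auto simp: field_simps)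
      have "ip n M (X + e \<cdot>\<^sub>m 1\<^sub>m n) \<ge> 0" using pdpos psd_eps_pd[OF X ep] by blast
      moreover have "ip n M X + e * ip n M (1\<^sub>m n) < 0"
      proof (cases "ip n M (1\<^sub>m n) \<le> 0")
        case True thus ?thesis using mX unfolding e_def by simp
      next
        case False thus ?thesis using mX unfolding e_def by (simp add: field_simps)
      qed
      ultimately show False using lin by simp
    qed
    thus ?thesis unfolding dual_cone_def using Ms by auto
  qed
  hence "\<forall>i<m. a i = 0" using COEF unfolding M_def by blast
  thus False using a(1) by blast
qed


lemma minner_smult_right: "X \<in> carrier_mat n n \<Longrightarrow> Y \<in> carrier_mat n n \<Longrightarrow> minner X (c \<cdot>\<^sub>m Y) = c * minner X Y"
proof -
  assume a: "X \<in> carrier_mat n n" "Y \<in> carrier_mat n n"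
  have "minner X (c \<cdot>\<^sub>m Y) = ip n X (c \<cdot>\<^sub>m Y)" using a by (intro minner_ip) auto
  thus ?thesis using a by (simp add: ip_smult_right minner_ip)
qed

lemma block_psd: "r < n \<Longrightarrow> block_id n r \<in> psd_cone n"
proof (rule Q_psd[OF block_id_sym])
  fix v
  show "Q n (block_id n r) v \<ge> 0"
    unfolding Q_def block_id_def by (auto intro!: sum_nonneg)
qed

theorem theorem4:
  fixes n m r :: nat and A :: "nat \<Rightarrow> real mat" and B :: "real mat" and c :: "nat \<Rightarrow> real"
  assumes A_sym: "\<forall>i<m. A i \<in> sym_mats n"
    and P_feas: "\<exists>x. P_feasible n m A B x"
    and lin_indep: "lin_indep_data n m A B"
    and B_def: "B = block_id n r" and r_lt: "r < n"
    and B_max_rank: "\<forall>x. P_feasible n m A B x \<longrightarrow> mrank n (B - mlincomb n m x A) \<le> mrank n B"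
    and sdeg: "sing_degree_is n (psd_cone n) (HD_space n m A B) (m + 1)"
  shows "(\<forall>x. P_feasible n m A B x \<longleftrightarrow> (\<forall>i<m. x i = 0))
       \<and> (\<exists>Y. D_feasible n m A c Y \<and> pos_def n Y)
       \<and> val_P n m A B c = 0 \<and> val_D n m A B c = 0"
proof -
  have Bs: "B \<in> sym_mats n" using B_def block_id_sym by simp
  have Bc: "B \<in> carrier_mat n n" using Bs sym_carrier by blast
  have Acarr: "\<forall>i<m. A i \<in> carrier_mat n n" using A_sym sym_carrier by blast
  have rpos: "r > 0" using r_pos[OF B_def lin_indep] .
  obtain ys where valid: "\<forall>i<Suc m. ys i \<in> dual_cone n (face_chain (psd_cone n) ys i) \<inter> orth n (HD_space n m A B)"
    and fin: "face_chain (psd_cone n) ys (Suc m) = min_face (psd_cone n) (HD_space n m A B \<inter> psd_cone n)"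
    using sdeg unfolding sing_degree_is_def facial_reduction_in_def by auto
  have minl: "\<forall>j<Suc m. \<not> facial_reduction_in n (psd_cone n) (HD_space n m A B) j"
    using sdeg unfolding sing_degree_is_def by auto
  have CORE: "\<forall>W\<in>dual_cone n (psd_cone n) \<inter> orth n (HD_space n m A B).
                \<exists>t. \<forall>X\<in>carrier_mat n n. minner W X = t * minner (ys 0) X"
    using core[OF A_sym Bs valid fin minl] by blast
  have COEF: "\<forall>a b. mlincomb n m a A + b \<cdot>\<^sub>m B \<in> dual_cone n (psd_cone n) \<longrightarrow> (\<forall>i<m. a i = 0)"
    using coeffs[OF A_sym B_def r_lt lin_indep CORE] by blast
  have ipB: "ip n B Y = (\<Sum>a<r. Y $$ (a,a))" for Y using ip_block r_lt B_def by simp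
  have P1: "\<forall>x. P_feasible n m A B x \<longleftrightarrow> (\<forall>i<m. x i = 0)"
  proof (rule allI, rule iffI)
    fix x assume "P_feasible n m A B x"
    hence Zp: "B - mlincomb n m x A \<in> psd_cone n" unfolding P_feasible_def .
    have Zeq: "B - mlincomb n m x A = mlincomb n m (\<lambda>i. - x i) A + 1 \<cdot>\<^sub>m B"
      using Bc by (intro eq_matI) (auto simp: mlincomb_index sum_negf)
    have "B - mlincomb n m x A \<in> dual_cone n (psd_cone n)"
    proof -
      have "minner (B - mlincomb n m x A) X \<ge> 0" if X: "X \<in> psd_cone n" for X
        using minner_ip[OF psd_carrier[OF Zp] psd_carrier[OF X]] psd_dual[OF Zp X] by simp
      thus ?thesis unfolding dual_cone_def using Zp psd_sym by auto
    qed
    hence "\<forall>i<m. - x i = 0" using COEF unfolding Zeq by blast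
    thus "\<forall>i<m. x i = 0" by simp
  next
    fix x :: "nat \<Rightarrow> real" assume "\<forall>i<m. x i = 0"
    hence "mlincomb n m x A = 0\<^sub>m n n" by (rule mlincomb_zero)
    hence "B - mlincomb n m x A = B" using Bc by (intro eq_matI) auto
    thus "P_feasible n m A B x" unfolding P_feasible_def using block_psd[OF r_lt] B_def by simp
  qed
  have SF: "\<exists>Y. pos_def n Y \<and> (\<forall>i<m. minner (A i) Y = c i) \<and> minner B Y = t" if t: "t > 0" for t
  proof -
    obtain Y where Y: "pos_def n Y" "\<forall>i<m. minner (A i) Y = (c i / t) * minner B Y"
      using strict_feas[OF A_sym Bs COEF, of "\<lambda>i. c i / t"] by blast
    have Yc: "Y \<in> carrier_mat n n" using Y(1) pd_Q sym_carrier by blast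
    define beta where "beta = minner B Y"
    have bpos: "beta > 0" unfolding beta_def minner_ip[OF Bc Yc] ipB
      using pd_diag[OF Y(1)] r_lt rpos by (intro sum_pos) auto
    define Y' where "Y' = (t / beta) \<cdot>\<^sub>m Y"
    have "pos_def n Y'" unfolding Y'_def using pd_smult[OF Y(1)] t bpos by simp
    moreover have "minner (A i) Y' = c i" if i: "i < m" for i
    proof -
      have "minner (A i) Y' = (t / beta) * minner (A i) Y"
        unfolding Y'_def using minner_smult_right[OF Acarr[rule_format, OF i] Yc] by simp
      thus ?thesis using Y(2) i t bpos unfolding beta_def by simp
    qed
    moreover have "minner B Y' = t"
      unfolding Y'_def using Bc Yc bpos by (simp add: minner_smult_right beta_def)
    ultimately show ?thesis by blast
  qed
  have P2: "\<exists>Y. D_feasible n m A c Y \<and> pos_def n Y"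
    using SF[of 1] pd_psd unfolding D_feasible_def by auto
  have VP: "val_P n m A B c = 0"
  proof -
    have "(\<lambda>x. ereal (\<Sum>i<m. c i * x i)) ` {x. P_feasible n m A B x} = {0}"
    proof
      show "(\<lambda>x. ereal (\<Sum>i<m. c i * x i)) ` {x. P_feasible n m A B x} \<subseteq> {0}"
        using P1 by auto
      have "P_feasible n m A B (\<lambda>_. 0)" using P1 by simp
      thus "{0} \<subseteq> (\<lambda>x. ereal (\<Sum>i<m. c i * x i)) ` {x. P_feasible n m A B x}"
        by (auto intro!: image_eqI[of _ _ "\<lambda>_. 0"])
    qed
    thus ?thesis unfolding val_P_def by simp
  qed
  have VD: "val_D n m A B c = 0"
  proof (rule antisym)
    show "val_D n m A B c \<le> 0"
    proof (rule ereal_le_epsilon2, simp)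
      fix e :: real assume e: "e > 0"
      obtain Y where Y: "pos_def n Y" "\<forall>i<m. minner (A i) Y = c i" "minner B Y = e" using SF[OF e] by blast
      have "D_feasible n m A c Y" unfolding D_feasible_def using Y pd_psd by auto
      hence "val_D n m A B c \<le> ereal (minner B Y)" unfolding val_D_def by (auto intro: Inf_lower)
      thus "val_D n m A B c \<le> ereal e" using Y(3) by simp
    qed
    show "0 \<le> val_D n m A B c" unfolding val_D_def
    proof (rule Inf_greatest)
      fix z assume "z \<in> (\<lambda>Y. ereal (minner B Y)) ` {Y. D_feasible n m A c Y}"
      then obtain Y where Y: "D_feasible n m A c Y" "z = ereal (minner B Y)" by auto
      have Yp: "Y \<in> psd_cone n" using Y(1) unfolding D_feasible_def by auto
      have "minner B Y = (\<Sum>a<r. Y $$ (a,a))" using minner_ip[OF Bc psd_carrier[OF Yp]] ipB by simp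
      also have "\<dots> \<ge> 0" using psd_diag[OF Yp] r_lt by (intro sum_nonneg) auto
      finally show "0 \<le> z" using Y(2) by simp
    qed
  qed
  show ?thesis using P1 P2 VP VD by blast
qed

end
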